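(* Let $H$ be the graph on vertex set $\{0,1,\dots,10\}$ in which $i,j$ are adjacent iff $1\le|i-j|\le3$. Suppose the edges of $H$ are colored red/blue with no red cycle of length $3$, $4$ or $5$, and at least one of the edges $\{0,1\},\{0,2\},\{0,3\}$ is blue. Then there exist $k\in\{1,\dots,9\}$ and a blue path $P_B$ in $H[\{0,\dots,k\}]$ with endpoints $0$ and $k$ such that at least one edge $\{k,k+j\}$ with $j\in\{1,2,3\}$, $k+j\le 10$, is blue, and $|V(P_B)\cap\{1,\dots,k\}|/k\ge 1/3$. As a consequence, for every $n\ge 2$, every red/blue coloring of $P_{3n+5}^3$ with no red cycle contains a blue path on $n$ vertices, so $\hat{R}(\mathcal{C},P_n)\le 9n+O(1)$.
   Context: $P_N^3$ is the graph on vertex set $\{1,\dots,N\}$ in which $i,j$ are adjacent iff $1\le|i-j|\le3$. $\hat{R}(\mathcal{C},P_n)$ is the minimum number of edges of a graph $G$ such that every red/blue coloring of $E(G)$ contains a red cycle or a blue path on $n$ vertices. *)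

theory Defs
  imports Main
begin

definition pow3_edges :: "nat set \<Rightarrow> nat set set" where
  "pow3_edges V = {{i, j} | i j. i \<in> V \<and> j \<in> V \<and> i < j \<and> j \<le> i + 3}"

definition is_path :: "nat set set \<Rightarrow> nat list \<Rightarrow> bool" where
  "is_path E vs \<longleftrightarrow> vs \<noteq> [] \<and> distinct vs \<and>
     (\<forall>i. i + 1 < length vs \<longrightarrow> {vs ! i, vs ! (i + 1)} \<in> E)"

definition is_cycle :: "nat set set \<Rightarrow> nat list \<Rightarrow> bool" where
  "is_cycle E vs \<longleftrightarrow> length vs \<ge> 3 \<and> distinct vs \<and>
     (\<forall>i < length vs. {vs ! i, vs ! ((i + 1) mod length vs)} \<in> E)"

definition red_edges :: "nat set set \<Rightarrow> (nat set \<Rightarrow> bool) \<Rightarrow> nat set set" where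
  "red_edges E red = {e \<in> E. red e}"

definition blue_edges :: "nat set set \<Rightarrow> (nat set \<Rightarrow> bool) \<Rightarrow> nat set set" where
  "blue_edges E red = {e \<in> E. \<not> red e}"

definition simple_graph :: "nat set set \<Rightarrow> bool" where
  "simple_graph E \<longleftrightarrow> finite E \<and> (\<forall>e \<in> E. card e = 2)"

definition arrows_C_P :: "nat set set \<Rightarrow> nat \<Rightarrow> bool" where
  "arrows_C_P E n \<longleftrightarrow> (\<forall>red. (\<exists>vs. is_cycle (red_edges E red) vs) \<or>
        (\<exists>vs. is_path (blue_edges E red) vs \<and> length vs = n))"

definition size_ramsey_C_P :: "nat \<Rightarrow> nat" where
  "size_ramsey_C_P n = (LEAST m. \<exists>E. simple_graph E \<and> card E = m \<and> arrows_C_P E n)"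

end

theory Submission
  imports Defs
begin

fun chain :: "nat set set \<Rightarrow> nat list \<Rightarrow> bool" where
  "chain E (a#b#xs) = ({a,b} \<in> E \<and> chain E (b#xs))"
| "chain E _ = True"

lemma chain_iff: "chain E xs \<longleftrightarrow> (\<forall>i. i+1 < length xs \<longrightarrow> {xs!i, xs!(i+1)} \<in> E)"
proof (induction E xs rule: chain.induct)
  case (1 E a b xs)
  show ?case
  proof
    assume "chain E (a#b#xs)"
    then show "\<forall>i. i+1 < length (a#b#xs) \<longrightarrow> {(a#b#xs)!i, (a#b#xs)!(i+1)} \<in> E"
      using 1 by (auto simp: nth_Cons split: nat.splits)
  next
    assume H: "\<forall>i. i+1 < length (a#b#xs) \<longrightarrow> {(a#b#xs)!i, (a#b#xs)!(i+1)} \<in> E"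
    have "{a,b} \<in> E" using H[rule_format, of 0] by simp
    moreover have "\<forall>i. i+1 < length (b#xs) \<longrightarrow> {(b#xs)!i, (b#xs)!(i+1)} \<in> E"
      using H[rule_format, of "Suc _"] by auto
    ultimately show "chain E (a#b#xs)" using 1 by simp
  qed
qed auto

lemma path_iff: "is_path E vs \<longleftrightarrow> vs \<noteq> [] \<and> distinct vs \<and> chain E vs"
  by (simp add: is_path_def chain_iff)

lemma cycle_intro:
  assumes "3 \<le> length vs" "distinct vs" "chain E (vs @ [hd vs])"
  shows "is_cycle E vs"
proof -
  have C: "\<forall>i. i+1 < length (vs @ [hd vs]) \<longrightarrow> {(vs @ [hd vs])!i, (vs @ [hd vs])!(i+1)} \<in> E"
    using assms(3) chain_iff by blast
  have "{vs ! i, vs ! ((i + 1) mod length vs)} \<in> E" if i: "i < length vs" for i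
  proof (cases "i + 1 < length vs")
    case True
    then show ?thesis using C[rule_format, of i] i by (simp add: nth_append)
  next
    case False
    then have "i + 1 = length vs" using i by simp
    moreover have "vs \<noteq> []" using assms(1) by auto
    ultimately show ?thesis using C[rule_format, of i] i by (simp add: nth_append hd_conv_nth)
  qed
  then show ?thesis using assms by (simp add: is_cycle_def)
qed

lemma pow3_mem: "{a,b} \<in> pow3_edges V \<longleftrightarrow> a \<in> V \<and> b \<in> V \<and> ((a < b \<and> b \<le> a + 3) \<or> (b < a \<and> a \<le> b + 3))"
  unfolding pow3_edges_def by (auto simp: doubleton_eq_iff)

lemma red_mem: "e \<in> red_edges E red \<longleftrightarrow> e \<in> E \<and> red e" by (simp add: red_edges_def)
lemma blue_mem: "e \<in> blue_edges E red \<longleftrightarrow> e \<in> E \<and> \<not> red e" by (simp add: blue_edges_def)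

lemma part1:
  fixes red :: "nat set \<Rightarrow> bool"
  assumes H: "\<forall>vs. is_cycle (red_edges (pow3_edges {0..10}) red) vs \<longrightarrow> length vs \<notin> {3, 4, 5}"
    and h0: "\<not> red {0, 1} \<or> \<not> red {0, 2} \<or> \<not> red {0, 3}"
  shows "\<exists>k \<in> {1..9}. \<exists>vs.
          is_path (blue_edges (pow3_edges {0..k}) red) vs \<and> hd vs = 0 \<and> last vs = k \<and>
          (\<exists>j \<in> {1, 2, 3}. k + j \<le> 10 \<and> \<not> red {k, k + j}) \<and>
          3 * card (set vs \<inter> {1..k}) \<ge> k"
proof -
  have c0: "\<not> (red {0,2} \<and> red {0,3} \<and> red {1,2} \<and> red {1,3})"
    using H[rule_format, of "[0,2,1,3]"] cycle_intro[of "[0,2,1,3]" "red_edges (pow3_edges {0..10}) red"]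
    by (auto simp: red_mem pow3_mem insert_commute)
  have c1: "\<not> (red {0,1} \<and> red {0,2} \<and> red {1,4} \<and> red {2,4})"
    using H[rule_format, of "[0,1,4,2]"] cycle_intro[of "[0,1,4,2]" "red_edges (pow3_edges {0..10}) red"]
    by (auto simp: red_mem pow3_mem insert_commute)
  have c2: "\<not> (red {0,1} \<and> red {0,3} \<and> red {1,2} \<and> red {2,3})"
    using H[rule_format, of "[0,1,2,3]"] cycle_intro[of "[0,1,2,3]" "red_edges (pow3_edges {0..10}) red"]
    by (auto simp: red_mem pow3_mem insert_commute)
  have c3: "\<not> (red {1,3} \<and> red {1,4} \<and> red {3,4})"
    using H[rule_format, of "[1,3,4]"] cycle_intro[of "[1,3,4]" "red_edges (pow3_edges {0..10}) red"]
    by (auto simp: red_mem pow3_mem insert_commute)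
  have c4: "\<not> (red {0,1} \<and> red {0,2} \<and> red {1,3} \<and> red {2,3})"
    using H[rule_format, of "[0,1,3,2]"] cycle_intro[of "[0,1,3,2]" "red_edges (pow3_edges {0..10}) red"]
    by (auto simp: red_mem pow3_mem insert_commute)
  have c5: "\<not> (red {2,3} \<and> red {2,4} \<and> red {3,4})"
    using H[rule_format, of "[2,3,4]"] cycle_intro[of "[2,3,4]" "red_edges (pow3_edges {0..10}) red"]
    by (auto simp: red_mem pow3_mem insert_commute)
  have c6: "\<not> (red {3,4} \<and> red {3,5} \<and> red {4,5})"
    using H[rule_format, of "[3,4,5]"] cycle_intro[of "[3,4,5]" "red_edges (pow3_edges {0..10}) red"]
    by (auto simp: red_mem pow3_mem insert_commute)
  have c7: "\<not> (red {0,1} \<and> red {0,3} \<and> red {1,3})"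
    using H[rule_format, of "[0,1,3]"] cycle_intro[of "[0,1,3]" "red_edges (pow3_edges {0..10}) red"]
    by (auto simp: red_mem pow3_mem insert_commute)
  have c8: "\<not> (red {1,2} \<and> red {1,3} \<and> red {2,3})"
    using H[rule_format, of "[1,2,3]"] cycle_intro[of "[1,2,3]" "red_edges (pow3_edges {0..10}) red"]
    by (auto simp: red_mem pow3_mem insert_commute)
  have c9: "\<not> (red {0,1} \<and> red {0,2} \<and> red {1,2})"
    using H[rule_format, of "[0,1,2]"] cycle_intro[of "[0,1,2]" "red_edges (pow3_edges {0..10}) red"]
    by (auto simp: red_mem pow3_mem insert_commute)
  have w11: "\<not> red {0,1} \<Longrightarrow> \<not> red {1,2} \<Longrightarrow> ?thesis"
  proof -
    assume a: "\<not> red {0,1}" "\<not> red {1,2}"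
    have P: "is_path (blue_edges (pow3_edges {0..1}) red) ([0,1]::nat list)" using a by (auto simp: path_iff blue_mem pow3_mem insert_commute)
    have e: "(1::nat) + 1 = 2" by simp
    have J: "\<exists>j\<in>{1,2,3}. 1 + j \<le> 10 \<and> \<not> red {1, 1 + j}"
      by (rule bexI[of _ 1], unfold e, intro conjI, simp, rule a(2), simp)
    have s: "set ([0,1]::nat list) \<inter> {1..1} = {1}" by auto
    have C: "1 \<le> 3 * card (set ([0,1]::nat list) \<inter> {1..1})" unfolding s by simp
    have HL: "hd ([0,1]::nat list) = 0" "last ([0,1]::nat list) = 1" by simp_all
    show ?thesis using P J C HL by (intro bexI[of _ 1]) (blast, simp)
  qed
  have w12: "\<not> red {0,1} \<Longrightarrow> \<not> red {1,3} \<Longrightarrow> ?thesis"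
  proof -
    assume a: "\<not> red {0,1}" "\<not> red {1,3}"
    have P: "is_path (blue_edges (pow3_edges {0..1}) red) ([0,1]::nat list)" using a by (auto simp: path_iff blue_mem pow3_mem insert_commute)
    have e: "(1::nat) + 2 = 3" by simp
    have J: "\<exists>j\<in>{1,2,3}. 1 + j \<le> 10 \<and> \<not> red {1, 1 + j}"
      by (rule bexI[of _ 2], unfold e, intro conjI, simp, rule a(2), simp)
    have s: "set ([0,1]::nat list) \<inter> {1..1} = {1}" by auto
    have C: "1 \<le> 3 * card (set ([0,1]::nat list) \<inter> {1..1})" unfolding s by simp
    have HL: "hd ([0,1]::nat list) = 0" "last ([0,1]::nat list) = 1" by simp_all
    show ?thesis using P J C HL by (intro bexI[of _ 1]) (blast, simp)
  qed
  have w13: "\<not> red {0,1} \<Longrightarrow> \<not> red {1,4} \<Longrightarrow> ?thesis"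
  proof -
    assume a: "\<not> red {0,1}" "\<not> red {1,4}"
    have P: "is_path (blue_edges (pow3_edges {0..1}) red) ([0,1]::nat list)" using a by (auto simp: path_iff blue_mem pow3_mem insert_commute)
    have e: "(1::nat) + 3 = 4" by simp
    have J: "\<exists>j\<in>{1,2,3}. 1 + j \<le> 10 \<and> \<not> red {1, 1 + j}"
      by (rule bexI[of _ 3], unfold e, intro conjI, simp, rule a(2), simp)
    have s: "set ([0,1]::nat list) \<inter> {1..1} = {1}" by auto
    have C: "1 \<le> 3 * card (set ([0,1]::nat list) \<inter> {1..1})" unfolding s by simp
    have HL: "hd ([0,1]::nat list) = 0" "last ([0,1]::nat list) = 1" by simp_all
    show ?thesis using P J C HL by (intro bexI[of _ 1]) (blast, simp)
  qed
  have w14: "\<not> red {0,2} \<Longrightarrow> \<not> red {2,3} \<Longrightarrow> ?thesis"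
  proof -
    assume a: "\<not> red {0,2}" "\<not> red {2,3}"
    have P: "is_path (blue_edges (pow3_edges {0..2}) red) ([0,2]::nat list)" using a by (auto simp: path_iff blue_mem pow3_mem insert_commute)
    have e: "(2::nat) + 1 = 3" by simp
    have J: "\<exists>j\<in>{1,2,3}. 2 + j \<le> 10 \<and> \<not> red {2, 2 + j}"
      by (rule bexI[of _ 1], unfold e, intro conjI, simp, rule a(2), simp)
    have s: "set ([0,2]::nat list) \<inter> {1..2} = {2}" by auto
    have C: "2 \<le> 3 * card (set ([0,2]::nat list) \<inter> {1..2})" unfolding s by simp
    have HL: "hd ([0,2]::nat list) = 0" "last ([0,2]::nat list) = 2" by simp_all
    show ?thesis using P J C HL by (intro bexI[of _ 2]) (blast, simp)
  qed
  have w15: "\<not> red {0,2} \<Longrightarrow> \<not> red {2,4} \<Longrightarrow> ?thesis"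
  proof -
    assume a: "\<not> red {0,2}" "\<not> red {2,4}"
    have P: "is_path (blue_edges (pow3_edges {0..2}) red) ([0,2]::nat list)" using a by (auto simp: path_iff blue_mem pow3_mem insert_commute)
    have e: "(2::nat) + 2 = 4" by simp
    have J: "\<exists>j\<in>{1,2,3}. 2 + j \<le> 10 \<and> \<not> red {2, 2 + j}"
      by (rule bexI[of _ 2], unfold e, intro conjI, simp, rule a(2), simp)
    have s: "set ([0,2]::nat list) \<inter> {1..2} = {2}" by auto
    have C: "2 \<le> 3 * card (set ([0,2]::nat list) \<inter> {1..2})" unfolding s by simp
    have HL: "hd ([0,2]::nat list) = 0" "last ([0,2]::nat list) = 2" by simp_all
    show ?thesis using P J C HL by (intro bexI[of _ 2]) (blast, simp)
  qed
  have w16: "\<not> red {0,2} \<Longrightarrow> \<not> red {1,2} \<Longrightarrow> \<not> red {1,3} \<Longrightarrow> \<not> red {3,4} \<Longrightarrow> ?thesis"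
  proof -
    assume a: "\<not> red {0,2}" "\<not> red {1,2}" "\<not> red {1,3}" "\<not> red {3,4}"
    have P: "is_path (blue_edges (pow3_edges {0..3}) red) ([0,2,1,3]::nat list)" using a by (auto simp: path_iff blue_mem pow3_mem insert_commute)
    have e: "(3::nat) + 1 = 4" by simp
    have J: "\<exists>j\<in>{1,2,3}. 3 + j \<le> 10 \<and> \<not> red {3, 3 + j}"
      by (rule bexI[of _ 1], unfold e, intro conjI, simp, rule a(4), simp)
    have s: "set ([0,2,1,3]::nat list) \<inter> {1..3} = {2,1,3}" by auto
    have C: "3 \<le> 3 * card (set ([0,2,1,3]::nat list) \<inter> {1..3})" unfolding s by simp
    have HL: "hd ([0,2,1,3]::nat list) = 0" "last ([0,2,1,3]::nat list) = 3" by simp_all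
    show ?thesis using P J C HL by (intro bexI[of _ 3]) (blast, simp)
  qed
  have w17: "\<not> red {0,3} \<Longrightarrow> \<not> red {3,4} \<Longrightarrow> ?thesis"
  proof -
    assume a: "\<not> red {0,3}" "\<not> red {3,4}"
    have P: "is_path (blue_edges (pow3_edges {0..3}) red) ([0,3]::nat list)" using a by (auto simp: path_iff blue_mem pow3_mem insert_commute)
    have e: "(3::nat) + 1 = 4" by simp
    have J: "\<exists>j\<in>{1,2,3}. 3 + j \<le> 10 \<and> \<not> red {3, 3 + j}"
      by (rule bexI[of _ 1], unfold e, intro conjI, simp, rule a(2), simp)
    have s: "set ([0,3]::nat list) \<inter> {1..3} = {3}" by auto
    have C: "3 \<le> 3 * card (set ([0,3]::nat list) \<inter> {1..3})" unfolding s by simp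
    have HL: "hd ([0,3]::nat list) = 0" "last ([0,3]::nat list) = 3" by simp_all
    show ?thesis using P J C HL by (intro bexI[of _ 3]) (blast, simp)
  qed
  have w18: "\<not> red {0,3} \<Longrightarrow> \<not> red {3,5} \<Longrightarrow> ?thesis"
  proof -
    assume a: "\<not> red {0,3}" "\<not> red {3,5}"
    have P: "is_path (blue_edges (pow3_edges {0..3}) red) ([0,3]::nat list)" using a by (auto simp: path_iff blue_mem pow3_mem insert_commute)
    have e: "(3::nat) + 2 = 5" by simp
    have J: "\<exists>j\<in>{1,2,3}. 3 + j \<le> 10 \<and> \<not> red {3, 3 + j}"
      by (rule bexI[of _ 2], unfold e, intro conjI, simp, rule a(2), simp)
    have s: "set ([0,3]::nat list) \<inter> {1..3} = {3}" by auto
    have C: "3 \<le> 3 * card (set ([0,3]::nat list) \<inter> {1..3})" unfolding s by simp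
    have HL: "hd ([0,3]::nat list) = 0" "last ([0,3]::nat list) = 3" by simp_all
    show ?thesis using P J C HL by (intro bexI[of _ 3]) (blast, simp)
  qed
  have w19: "\<not> red {0,3} \<Longrightarrow> \<not> red {1,2} \<Longrightarrow> \<not> red {1,3} \<Longrightarrow> \<not> red {2,4} \<Longrightarrow> \<not> red {4,5} \<Longrightarrow> ?thesis"
  proof -
    assume a: "\<not> red {0,3}" "\<not> red {1,2}" "\<not> red {1,3}" "\<not> red {2,4}" "\<not> red {4,5}"
    have P: "is_path (blue_edges (pow3_edges {0..4}) red) ([0,3,1,2,4]::nat list)" using a by (auto simp: path_iff blue_mem pow3_mem insert_commute)
    have e: "(4::nat) + 1 = 5" by simp
    have J: "\<exists>j\<in>{1,2,3}. 4 + j \<le> 10 \<and> \<not> red {4, 4 + j}"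
      by (rule bexI[of _ 1], unfold e, intro conjI, simp, rule a(5), simp)
    have s: "set ([0,3,1,2,4]::nat list) \<inter> {1..4} = {3,1,2,4}" by auto
    have C: "4 \<le> 3 * card (set ([0,3,1,2,4]::nat list) \<inter> {1..4})" unfolding s by simp
    have HL: "hd ([0,3,1,2,4]::nat list) = 0" "last ([0,3,1,2,4]::nat list) = 4" by simp_all
    show ?thesis using P J C HL by (intro bexI[of _ 4]) (blast, simp)
  qed
  have w20: "\<not> red {0,3} \<Longrightarrow> \<not> red {1,2} \<Longrightarrow> \<not> red {1,4} \<Longrightarrow> \<not> red {2,3} \<Longrightarrow> \<not> red {4,5} \<Longrightarrow> ?thesis"
  proof -
    assume a: "\<not> red {0,3}" "\<not> red {1,2}" "\<not> red {1,4}" "\<not> red {2,3}" "\<not> red {4,5}"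
    have P: "is_path (blue_edges (pow3_edges {0..4}) red) ([0,3,2,1,4]::nat list)" using a by (auto simp: path_iff blue_mem pow3_mem insert_commute)
    have e: "(4::nat) + 1 = 5" by simp
    have J: "\<exists>j\<in>{1,2,3}. 4 + j \<le> 10 \<and> \<not> red {4, 4 + j}"
      by (rule bexI[of _ 1], unfold e, intro conjI, simp, rule a(5), simp)
    have s: "set ([0,3,2,1,4]::nat list) \<inter> {1..4} = {3,2,1,4}" by auto
    have C: "4 \<le> 3 * card (set ([0,3,2,1,4]::nat list) \<inter> {1..4})" unfolding s by simp
    have HL: "hd ([0,3,2,1,4]::nat list) = 0" "last ([0,3,2,1,4]::nat list) = 4" by simp_all
    show ?thesis using P J C HL by (intro bexI[of _ 4]) (blast, simp)
  qed
  show ?thesis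
  proof (cases "red {0,1}")
    assume x_0_1: "red {0,1}"
      show ?thesis proof (cases "red {0,3}")
        assume x_0_3: "red {0,3}"
          show ?thesis proof (cases "red {1,3}")
            assume x_1_3: "red {1,3}"
              show ?thesis using c7 x_0_1 x_0_3 x_1_3 by blast
          next
            assume x_1_3: "\<not> red {1,3}"
              show ?thesis proof (cases "red {0,2}")
                assume x_0_2: "red {0,2}"
                  show ?thesis using h0 x_0_1 x_0_2 x_0_3 by blast
              next
                assume x_0_2: "\<not> red {0,2}"
                  show ?thesis proof (cases "red {2,3}")
                    assume x_2_3: "red {2,3}"
                      show ?thesis proof (cases "red {1,2}")
                        assume x_1_2: "red {1,2}"
                          show ?thesis using c2 x_0_1 x_0_3 x_1_2 x_2_3 by blast
                      next
                        assume x_1_2: "\<not> red {1,2}"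
                          show ?thesis proof (cases "red {2,4}")
                            assume x_2_4: "red {2,4}"
                              show ?thesis proof (cases "red {3,4}")
                                assume x_3_4: "red {3,4}"
                                  show ?thesis using c5 x_3_4 x_2_3 x_2_4 by blast
                              next
                                assume x_3_4: "\<not> red {3,4}"
                                  show ?thesis using w16 x_0_2 x_1_2 x_1_3 x_3_4 by blast
                              qed
                          next
                            assume x_2_4: "\<not> red {2,4}"
                              show ?thesis using w15 x_0_2 x_2_4 by blast
                          qed
                      qed
                  next
                    assume x_2_3: "\<not> red {2,3}"
                      show ?thesis using w14 x_0_2 x_2_3 by blast
                  qed
              qed
          qed
      next
        assume x_0_3: "\<not> red {0,3}"
          show ?thesis proof (cases "red {3,4}")
            assume x_3_4: "red {3,4}"
              show ?thesis proof (cases "red {3,5}")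
                assume x_3_5: "red {3,5}"
                  show ?thesis proof (cases "red {4,5}")
                    assume x_4_5: "red {4,5}"
                      show ?thesis using c6 x_3_4 x_3_5 x_4_5 by blast
                  next
                    assume x_4_5: "\<not> red {4,5}"
                      show ?thesis proof (cases "red {1,3}")
                        assume x_1_3: "red {1,3}"
                          show ?thesis proof (cases "red {1,4}")
                            assume x_1_4: "red {1,4}"
                              show ?thesis using c3 x_3_4 x_1_3 x_1_4 by blast
                          next
                            assume x_1_4: "\<not> red {1,4}"
                              show ?thesis proof (cases "red {0,2}")
                                assume x_0_2: "red {0,2}"
                                  show ?thesis proof (cases "red {2,3}")
                                    assume x_2_3: "red {2,3}"
                                      show ?thesis using c4 x_0_1 x_0_2 x_1_3 x_2_3 by blast
                                  next
                                    assume x_2_3: "\<not> red {2,3}"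
                                      show ?thesis proof (cases "red {1,2}")
                                        assume x_1_2: "red {1,2}"
                                          show ?thesis using c9 x_0_1 x_0_2 x_1_2 by blast
                                      next
                                        assume x_1_2: "\<not> red {1,2}"
                                          show ?thesis using w20 x_0_3 x_1_2 x_1_4 x_2_3 x_4_5 by blast
                                      qed
                                  qed
                              next
                                assume x_0_2: "\<not> red {0,2}"
                                  show ?thesis proof (cases "red {2,3}")
                                    assume x_2_3: "red {2,3}"
                                      show ?thesis proof (cases "red {2,4}")
                                        assume x_2_4: "red {2,4}"
                                          show ?thesis using c5 x_3_4 x_2_3 x_2_4 by blast
                                      next
                                        assume x_2_4: "\<not> red {2,4}"
                                          show ?thesis using w15 x_0_2 x_2_4 by blast
                                      qed
                                  next
                                    assume x_2_3: "\<not> red {2,3}"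
                                      show ?thesis using w14 x_0_2 x_2_3 by blast
                                  qed
                              qed
                          qed
                      next
                        assume x_1_3: "\<not> red {1,3}"
                          show ?thesis proof (cases "red {2,3}")
                            assume x_2_3: "red {2,3}"
                              show ?thesis proof (cases "red {2,4}")
                                assume x_2_4: "red {2,4}"
                                  show ?thesis using c5 x_3_4 x_2_3 x_2_4 by blast
                              next
                                assume x_2_4: "\<not> red {2,4}"
                                  show ?thesis proof (cases "red {0,2}")
                                    assume x_0_2: "red {0,2}"
                                      show ?thesis proof (cases "red {1,2}")
                                        assume x_1_2: "red {1,2}"
                                          show ?thesis using c9 x_0_1 x_0_2 x_1_2 by blast
                                      next
                                        assume x_1_2: "\<not> red {1,2}"
                                          show ?thesis using w19 x_0_3 x_1_2 x_1_3 x_2_4 x_4_5 by blast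
                                      qed
                                  next
                                    assume x_0_2: "\<not> red {0,2}"
                                      show ?thesis using w15 x_0_2 x_2_4 by blast
                                  qed
                              qed
                          next
                            assume x_2_3: "\<not> red {2,3}"
                              show ?thesis proof (cases "red {0,2}")
                                assume x_0_2: "red {0,2}"
                                  show ?thesis proof (cases "red {1,2}")
                                    assume x_1_2: "red {1,2}"
                                      show ?thesis using c9 x_0_1 x_0_2 x_1_2 by blast
                                  next
                                    assume x_1_2: "\<not> red {1,2}"
                                      show ?thesis proof (cases "red {2,4}")
                                        assume x_2_4: "red {2,4}"
                                          show ?thesis proof (cases "red {1,4}")
                                            assume x_1_4: "red {1,4}"
                                              show ?thesis using c1 x_0_1 x_0_2 x_1_4 x_2_4 by blast
                                          next
                                            assume x_1_4: "\<not> red {1,4}"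
                                              show ?thesis using w20 x_0_3 x_1_2 x_1_4 x_2_3 x_4_5 by blast
                                          qed
                                      next
                                        assume x_2_4: "\<not> red {2,4}"
                                          show ?thesis using w19 x_0_3 x_1_2 x_1_3 x_2_4 x_4_5 by blast
                                      qed
                                  qed
                              next
                                assume x_0_2: "\<not> red {0,2}"
                                  show ?thesis using w14 x_0_2 x_2_3 by blast
                              qed
                          qed
                      qed
                  qed
              next
                assume x_3_5: "\<not> red {3,5}"
                  show ?thesis using w18 x_0_3 x_3_5 by blast
              qed
          next
            assume x_3_4: "\<not> red {3,4}"
              show ?thesis using w17 x_3_4 x_0_3 by blast
          qed
      qed
  next
    assume x_0_1: "\<not> red {0,1}"
      show ?thesis proof (cases "red {1,2}")
        assume x_1_2: "red {1,2}"
          show ?thesis proof (cases "red {1,3}")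
            assume x_1_3: "red {1,3}"
              show ?thesis proof (cases "red {2,3}")
                assume x_2_3: "red {2,3}"
                  show ?thesis using c8 x_1_2 x_1_3 x_2_3 by blast
              next
                assume x_2_3: "\<not> red {2,3}"
                  show ?thesis proof (cases "red {1,4}")
                    assume x_1_4: "red {1,4}"
                      show ?thesis proof (cases "red {3,4}")
                        assume x_3_4: "red {3,4}"
                          show ?thesis using c3 x_3_4 x_1_3 x_1_4 by blast
                      next
                        assume x_3_4: "\<not> red {3,4}"
                          show ?thesis proof (cases "red {0,2}")
                            assume x_0_2: "red {0,2}"
                              show ?thesis proof (cases "red {0,3}")
                                assume x_0_3: "red {0,3}"
                                  show ?thesis using c0 x_0_2 x_0_3 x_1_2 x_1_3 by blast
                              next
                                assume x_0_3: "\<not> red {0,3}"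
                                  show ?thesis using w17 x_3_4 x_0_3 by blast
                              qed
                          next
                            assume x_0_2: "\<not> red {0,2}"
                              show ?thesis using w14 x_0_2 x_2_3 by blast
                          qed
                      qed
                  next
                    assume x_1_4: "\<not> red {1,4}"
                      show ?thesis using w13 x_0_1 x_1_4 by blast
                  qed
              qed
          next
            assume x_1_3: "\<not> red {1,3}"
              show ?thesis using w12 x_0_1 x_1_3 by blast
          qed
      next
        assume x_1_2: "\<not> red {1,2}"
          show ?thesis using w11 x_0_1 x_1_2 by blast
      qed
  qed
qed

lemma chain_Cons: "chain E (x # ys) \<longleftrightarrow> (ys = [] \<or> ({x, hd ys} \<in> E \<and> chain E ys))"
  by (cases ys) auto

lemma chain_snoc: "xs \<noteq> [] \<Longrightarrow> chain E (xs @ [y]) \<longleftrightarrow> chain E xs \<and> {last xs, y} \<in> E"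
proof (induction xs)
  case Nil then show ?case by simp
next
  case (Cons x xs)
  then show ?case by (cases xs) (auto simp: chain_Cons)
qed

lemma chain_append: "chain E (xs @ y # ys) \<longleftrightarrow> chain E (xs @ [y]) \<and> chain E (y # ys)"
proof (induction xs)
  case Nil then show ?case by simp
next
  case (Cons x xs)
  then show ?case by (cases xs) (auto simp: chain_Cons)
qed

lemma chain_mono: "E \<subseteq> F \<Longrightarrow> chain E xs \<Longrightarrow> chain F xs"
  by (induction E xs rule: chain.induct) auto

lemma chain_map: "(\<And>a b. {a,b} \<in> E \<Longrightarrow> {f a, f b} \<in> F) \<Longrightarrow> chain E xs \<Longrightarrow> chain F (map f xs)"
  by (induction E xs rule: chain.induct) auto

lemma chain_set: "(\<And>e. e \<in> E \<Longrightarrow> e \<subseteq> V) \<Longrightarrow> chain E xs \<Longrightarrow> xs \<noteq> [] \<Longrightarrow> set xs \<subseteq> insert (last xs) V"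
  by (induction E xs rule: chain.induct) auto

lemma pow3_sub: "e \<in> pow3_edges V \<Longrightarrow> e \<subseteq> V"
  unfolding pow3_edges_def by auto

lemma pow3_mono: "V \<subseteq> W \<Longrightarrow> pow3_edges V \<subseteq> pow3_edges W"
  unfolding pow3_edges_def by fastforce

lemma blue_mono: "E \<subseteq> F \<Longrightarrow> blue_edges E red \<subseteq> blue_edges F red"
  unfolding blue_edges_def by blast

lemma blue_sub: "e \<in> blue_edges (pow3_edges V) red \<Longrightarrow> e \<subseteq> V"
  unfolding blue_edges_def using pow3_sub by blast

lemma path_set: "is_path (blue_edges (pow3_edges V) red) P \<Longrightarrow> set P \<subseteq> insert (last P) V"
proof -
  assume p: "is_path (blue_edges (pow3_edges V) red) P"
  have "chain (blue_edges (pow3_edges V) red) P" "P \<noteq> []" using p by (simp_all add: path_iff)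
  moreover have "\<And>e. e \<in> blue_edges (pow3_edges V) red \<Longrightarrow> e \<subseteq> V" by (rule blue_sub)
  ultimately show ?thesis using chain_set by metis
qed

lemma cycle_map:
  assumes "is_cycle E vs" "inj f" "\<And>a b. {a,b} \<in> E \<Longrightarrow> {f a, f b} \<in> F"
  shows "is_cycle F (map f vs)"
proof -
  have inj: "inj_on f (set vs)" using assms(2) inj_on_subset by blast
  have L: "length vs \<ge> 3" "distinct vs" "\<forall>i<length vs. {vs ! i, vs ! ((i + 1) mod length vs)} \<in> E"
    using assms(1) unfolding is_cycle_def by auto
  have "{map f vs ! i, map f vs ! ((i + 1) mod length (map f vs))} \<in> F" if i: "i < length vs" for i
  proof -
    have "length vs > 0" using i by arith
    then have "(i + 1) mod length vs < length vs" by simp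
    then show ?thesis using assms(3) L(3) i by simp
  qed
  then show ?thesis using L inj unfolding is_cycle_def by (simp add: distinct_map)
qed

lemma path_take: "is_path E xs \<Longrightarrow> 0 < n \<Longrightarrow> is_path E (take n xs)"
  unfolding is_path_def by auto

lemma shift_img: "((+) (m::nat)) ` {a, b} = {m + a, m + b}" by simp

lemma grow:
  assumes nocyc: "\<nexists>vs. is_cycle (red_edges (pow3_edges {1..N}) red) vs"
  shows "1 \<le> m \<Longrightarrow> m \<le> N \<Longrightarrow> j \<in> {1,2,3} \<Longrightarrow> m + j \<le> N \<Longrightarrow> \<not> red {m, m+j} \<Longrightarrow>
     is_path (blue_edges (pow3_edges {1..m}) red) P \<Longrightarrow> last P = m \<Longrightarrow> m \<le> 3 * length P \<Longrightarrow>
     \<exists>Q. is_path (blue_edges (pow3_edges {1..N}) red) Q \<and> N \<le> 3 * length Q + 6"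
proof (induction "N - m" arbitrary: m j P rule: less_induct)
  case less
  have Pne: "P \<noteq> []" using less.prems(6) by (simp add: is_path_def)
  have Pset: "set P \<subseteq> {1..m}" using path_set[OF less.prems(6)] less.prems(1,7) by auto
  have Pdist: "distinct P" using less.prems(6) by (simp add: is_path_def)
  have Pch: "chain (blue_edges (pow3_edges {1..m}) red) P" using less.prems(6) by (simp add: path_iff)
  have Psplit: "P = butlast P @ [m]" using Pne less.prems(7) by (metis append_butlast_last_id)
  have Bset: "set (butlast P) \<subseteq> {1..<m}"
  proof -
    have "distinct (butlast P @ [m])" using Pdist Psplit by metis
    then have A: "m \<notin> set (butlast P)" by simp
    have B: "set (butlast P) \<subseteq> {1..m}" using Pset in_set_butlastD by fastforce
    show ?thesis
    proof
      fix t assume t: "t \<in> set (butlast P)"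
      then have "t \<in> {1..m}" "t \<noteq> m" using A B by auto
      then show "t \<in> {1..<m}" by auto
    qed
  qed
  show ?case
  proof (cases "m + 10 \<le> N")
    case False
    define Q where "Q = P @ [m + j]"
    have jpos: "1 \<le> j" "j \<le> 3" using less.prems(3) by auto
    have "{last P, m + j} \<in> blue_edges (pow3_edges {1..N}) red"
      using less.prems(1,4,5,7) jpos by (auto simp: blue_mem pow3_mem)
    moreover have "chain (blue_edges (pow3_edges {1..N}) red) P"
      by (rule chain_mono[OF blue_mono[OF pow3_mono] Pch]) (use less.prems(4) in auto)
    ultimately have "chain (blue_edges (pow3_edges {1..N}) red) Q"
      unfolding Q_def using chain_snoc[OF Pne] by blast
    moreover have "distinct Q" unfolding Q_def using Pdist Pset jpos by auto
    ultimately have "is_path (blue_edges (pow3_edges {1..N}) red) Q" by (simp add: path_iff Q_def)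
    moreover have "N \<le> 3 * length Q + 6" unfolding Q_def using False less.prems(8) by simp
    ultimately show ?thesis by blast
  next
    case True
    define red' where "red' = (\<lambda>e. red (((+) m) ` e))"
    have H': "\<forall>vs. is_cycle (red_edges (pow3_edges {0..10}) red') vs \<longrightarrow> length vs \<notin> {3, 4, 5}"
    proof (intro allI impI)
      fix vs assume c: "is_cycle (red_edges (pow3_edges {0..10}) red') vs"
      have "is_cycle (red_edges (pow3_edges {1..N}) red) (map ((+) m) vs)"
      proof (rule cycle_map[OF c])
        show "inj ((+) m)" by (simp add: inj_on_def)
        fix a b assume "{a, b} \<in> red_edges (pow3_edges {0..10}) red'"
        then show "{m + a, m + b} \<in> red_edges (pow3_edges {1..N}) red"
          using True less.prems(1) by (auto simp: red_mem pow3_mem red'_def)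
      qed
      then show "length vs \<notin> {3, 4, 5}" using nocyc by blast
    qed
    have rj: "red' {0, j} = red {m, m+j}" by (simp add: red'_def)
    have h0: "\<not> red' {0, 1} \<or> \<not> red' {0, 2} \<or> \<not> red' {0, 3}"
      using less.prems(3,5) rj by blast
    obtain k vs j' where k: "k \<in> {1..9}"
      and vp: "is_path (blue_edges (pow3_edges {0..k}) red') vs" and vh: "hd vs = 0" and vl: "last vs = k"
      and j': "j' \<in> {1, 2, 3}" "k + j' \<le> 10" "\<not> red' {k, k + j'}"
      and vc: "3 * card (set vs \<inter> {1..k}) \<ge> k"
      using part1[OF H' h0] by blast
    have vne: "vs \<noteq> []" using vp by (simp add: is_path_def)
    have vd: "distinct vs" using vp by (simp add: is_path_def)
    have vsplit: "vs = 0 # tl vs" using vne vh by (metis list.collapse)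
    define Q where "Q = map ((+) m) vs"
    define P' where "P' = butlast P @ Q"
    have Qsplit: "Q = m # map ((+) m) (tl vs)" unfolding Q_def by (subst vsplit) simp
    have Qch: "chain (blue_edges (pow3_edges {1..m+k}) red) Q"
    proof -
      have "chain (blue_edges (pow3_edges {m..m+k}) red) Q"
        unfolding Q_def
      proof (rule chain_map)
        show "chain (blue_edges (pow3_edges {0..k}) red') vs" using vp by (simp add: path_iff)
        fix a b assume "{a, b} \<in> blue_edges (pow3_edges {0..k}) red'"
        then show "{m + a, m + b} \<in> blue_edges (pow3_edges {m..m+k}) red"
          by (auto simp: blue_mem pow3_mem red'_def)
      qed
      then show ?thesis
        by (rule chain_mono[OF blue_mono[OF pow3_mono], rotated]) (use less.prems(1) in auto)
    qed
    have Pch': "chain (blue_edges (pow3_edges {1..m+k}) red) P"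
      by (rule chain_mono[OF blue_mono[OF pow3_mono] Pch]) auto
    have P'ch: "chain (blue_edges (pow3_edges {1..m+k}) red) P'"
    proof -
      have "P' = butlast P @ m # map ((+) m) (tl vs)" unfolding P'_def using Qsplit by simp
      moreover have "chain (blue_edges (pow3_edges {1..m+k}) red) (butlast P @ [m])"
        using Pch' Psplit by metis
      ultimately show ?thesis using chain_append Qch Qsplit by metis
    qed
    have Qset: "set Q \<subseteq> {m..}" unfolding Q_def by auto
    have P'd: "distinct P'"
      unfolding P'_def using Pdist Psplit Bset Qset vd
      by (auto simp: Q_def distinct_map inj_on_def distinct_butlast) 
    have P'p: "is_path (blue_edges (pow3_edges {1..m+k}) red) P'"
      using P'ch P'd by (simp add: path_iff P'_def Q_def vne)
    have P'l: "last P' = m + k" unfolding P'_def Q_def using vne vl by (simp add: last_map)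
    have cardle: "card (set vs \<inter> {1..k}) \<le> length vs - 1"
    proof -
      have "card (set vs \<inter> {1..k}) \<le> card (set vs - {0})" by (rule card_mono) auto
      also have "\<dots> = length vs - 1"
      proof -
        have "0 \<in> set vs" using vne vh hd_in_set by fastforce
        then show ?thesis using vd by (simp add: card_Diff_singleton distinct_card)
      qed
      finally show ?thesis .
    qed
    have lenP': "length P' = length P - 1 + length vs" unfolding P'_def Q_def by simp
    have P'len: "m + k \<le> 3 * length P'"
    proof -
      have "length P \<ge> 1" "length vs \<ge> 1" using Pne vne by (auto simp: Suc_le_eq)
      then show ?thesis using lenP' cardle vc less.prems(8) by arith
    qed
    have jr: "\<not> red {m + k, m + k + j'}"
      using j'(3) by (simp add: red'_def add.assoc)
    show ?thesis
    proof (rule less.hyps[of "m + k" j' P'])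
      show "N - (m + k) < N - m" using k True by auto
      show "1 \<le> m + k" using less.prems(1) by simp
      show "m + k \<le> N" using k True by simp
      show "j' \<in> {1,2,3}" by (rule j'(1))
      show "m + k + j' \<le> N" using j'(2) True by simp
      show "\<not> red {m + k, m + k + j'}" by (rule jr)
      show "is_path (blue_edges (pow3_edges {1..m + k}) red) P'" by (rule P'p)
      show "last P' = m + k" by (rule P'l)
      show "m + k \<le> 3 * length P'" by (rule P'len)
    qed
  qed
qed

lemma part2:
  assumes n: "n \<ge> 2"
    and nocyc: "\<nexists>vs. is_cycle (red_edges (pow3_edges {1..3 * n + 5}) red) vs"
  shows "\<exists>vs. is_path (blue_edges (pow3_edges {1..3 * n + 5}) red) vs \<and> length vs = n"
proof -
  let ?N = "3 * n + 5"
  have tri: "\<not> (red {1,2} \<and> red {2,3} \<and> red {1,3})"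
  proof
    assume r: "red {1,2} \<and> red {2,3} \<and> red {1,3}"
    have "is_cycle (red_edges (pow3_edges {1..?N}) red) [1,2,3]"
      by (rule cycle_intro) (use r n in \<open>auto simp: red_mem pow3_mem insert_commute\<close>)
    then show False using nocyc by blast
  qed
  have "\<exists>s j. s \<in> {1,2,3} \<and> j \<in> {1,2,3} \<and> s + j \<le> 4 \<and> \<not> red {s, s + j}"
  proof -
    have e1: "(1::nat) + 1 = 2" "(2::nat) + 1 = 3" "(1::nat) + 2 = 3" by simp_all
    have m1: "(1::nat) \<in> {1,2,3}" "(2::nat) \<in> {1,2,3}" by simp_all
    have m2: "(1::nat) + 1 \<le> 4" "(2::nat) + 1 \<le> 4" "(1::nat) + 2 \<le> 4" by simp_all
    have "\<not> red {1, 1+1} \<or> \<not> red {2, 2+1} \<or> \<not> red {1, 1+2}"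
      unfolding e1 using tri by blast
    then show ?thesis using m1 m2 by blast
  qed
  then obtain s j where s: "s \<in> {1,2,3}" "j \<in> {1,2,3}" "s + j \<le> 4" "\<not> red {s, s + j}" by blast
  have p0: "is_path (blue_edges (pow3_edges {1..s}) red) [s]" by (simp add: is_path_def)
  obtain Q where Q: "is_path (blue_edges (pow3_edges {1..?N}) red) Q" "?N \<le> 3 * length Q + 6"
    using grow[OF nocyc, of s j "[s]"] s p0 n by auto
  have "n \<le> length Q" using Q(2) by simp
  then have "is_path (blue_edges (pow3_edges {1..?N}) red) (take n Q) \<and> length (take n Q) = n"
    using path_take[OF Q(1)] n by simp
  then show ?thesis by blast
qed

lemma card_pow3: "card (pow3_edges {1..N}) \<le> 3 * N" "finite (pow3_edges {1..N})"
proof -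
  have sub: "pow3_edges {1..N} \<subseteq> (\<lambda>(i, d). {i, i + d}) ` ({1..N} \<times> {1,2,3})"
  proof
    fix e assume "e \<in> pow3_edges {1..N}"
    then obtain i j where "e = {i, j}" "i \<in> {1..N}" "j \<in> {1..N}" "i < j" "j \<le> i + 3"
      unfolding pow3_edges_def by fastforce
    then show "e \<in> (\<lambda>(i, d). {i, i + d}) ` ({1..N} \<times> {1,2,3})"
      by (intro image_eqI[of _ _ "(i, j - i)"]) auto
  qed
  have "card (pow3_edges {1..N}) \<le> card ((\<lambda>(i, d). {i, i + d}) ` ({1..N} \<times> {1,2,3}))"
    by (rule card_mono[OF _ sub]) simp
  also have "\<dots> \<le> card ({1..N} \<times> {1::nat,2,3})" by (rule card_image_le) simp
  also have "\<dots> = 3 * N" by (simp add: card_cartesian_product)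
  finally show "card (pow3_edges {1..N}) \<le> 3 * N" .
  show "finite (pow3_edges {1..N})" by (rule finite_subset[OF sub]) simp
qed

lemma part3: "\<exists>C :: nat. \<forall>n \<ge> 2. size_ramsey_C_P n \<le> 9 * n + C"
proof (intro exI[of _ 15] allI impI)
  fix n :: nat assume n: "n \<ge> 2"
  let ?E = "pow3_edges {1..3 * n + 5}"
  have sg: "simple_graph ?E"
    unfolding simple_graph_def using card_pow3(2)
    by (auto simp: pow3_edges_def)
  have ar: "arrows_C_P ?E n" unfolding arrows_C_P_def using part2[OF n] by blast
  have "size_ramsey_C_P n \<le> card ?E"
    unfolding size_ramsey_C_P_def by (rule Least_le) (use sg ar in blast)
  also have "\<dots> \<le> 3 * (3 * n + 5)" by (rule card_pow3(1))
  finally show "size_ramsey_C_P n \<le> 9 * n + 15" by simp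
qed

theorem mainTheorem7:
  shows
  "(\<forall>red :: nat set \<Rightarrow> bool.
      (\<forall>vs. is_cycle (red_edges (pow3_edges {0..10}) red) vs \<longrightarrow> length vs \<notin> {3, 4, 5}) \<and>
      (\<not> red {0, 1} \<or> \<not> red {0, 2} \<or> \<not> red {0, 3}) \<longrightarrow>
      (\<exists>k \<in> {1..9}. \<exists>vs.
          is_path (blue_edges (pow3_edges {0..k}) red) vs \<and> hd vs = 0 \<and> last vs = k \<and>
          (\<exists>j \<in> {1, 2, 3}. k + j \<le> 10 \<and> \<not> red {k, k + j}) \<and>
          3 * card (set vs \<inter> {1..k}) \<ge> k))
   \<and>
   (\<forall>n \<ge> 2. \<forall>red :: nat set \<Rightarrow> bool.
      (\<nexists>vs. is_cycle (red_edges (pow3_edges {1..3 * n + 5}) red) vs) \<longrightarrow>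
      (\<exists>vs. is_path (blue_edges (pow3_edges {1..3 * n + 5}) red) vs \<and> length vs = n))
   \<and>
   (\<exists>C :: nat. \<forall>n \<ge> 2. size_ramsey_C_P n \<le> 9 * n + C)"
proof (intro conjI allI impI)
  fix red :: "nat set \<Rightarrow> bool"
  assume "(\<forall>vs. is_cycle (red_edges (pow3_edges {0..10}) red) vs \<longrightarrow> length vs \<notin> {3, 4, 5}) \<and>
      (\<not> red {0, 1} \<or> \<not> red {0, 2} \<or> \<not> red {0, 3})"
  then show "\<exists>k \<in> {1..9}. \<exists>vs.
          is_path (blue_edges (pow3_edges {0..k}) red) vs \<and> hd vs = 0 \<and> last vs = k \<and>
          (\<exists>j \<in> {1, 2, 3}. k + j \<le> 10 \<and> \<not> red {k, k + j}) \<and>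
          3 * card (set vs \<inter> {1..k}) \<ge> k"
    by (elim conjE) (rule part1)
next
  fix n :: nat and red :: "nat set \<Rightarrow> bool"
  assume "n \<ge> 2" "\<nexists>vs. is_cycle (red_edges (pow3_edges {1..3 * n + 5}) red) vs"
  then show "\<exists>vs. is_path (blue_edges (pow3_edges {1..3 * n + 5}) red) vs \<and> length vs = n"
    by (rule part2)
next
  show "\<exists>C :: nat. \<forall>n \<ge> 2. size_ramsey_C_P n \<le> 9 * n + C" by (rule part3)
qed

end
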